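(* Let $X=\{a,\dots,b\}\subseteq\mathbb{N}$ and let $f^p:\mathcal{P}^n\to X$ be a non-dictatorial generalized median voter scheme with monotonic family of fixed ballots $p=\{p_S\}_{S\in 2^N}$. Then $f^p$ is NOM if and only if, for each $i\in N$, $p_{N\setminus\{i\}}\in\{a,a+1\}$ and $p_{\{i\}}\in\{b-1,b\}$.
   Context: $N=\{1,\dots,n\}$, $n\ge2$; $X=\{a,a+1,\dots,b\}$, $|X|\ge2$; $\mathcal{P}$ all strict linear orders on $X$; $t(P_i)$ the top of $P_i$. A monotonic family of fixed ballots is $p=\{p_S\}_{S\subseteq N}$ with $p_S\in X$, $p_N=a$, $p_\emptyset=b$, and $p_Q\le p_T$ whenever $T\subseteq Q$. The generalized median voter scheme is $f^p(P)=\min_{S\subseteq N}\max_{j\in S}\{t(P_j),p_S\}$. A rule is dictatorial if there is $i$ with $f(P)=t(P_i)$ for all $P$. Option set $O(P_i)=\{f(P_i,P_{-i}):P_{-i}\in\mathcal{P}^{n-1}\}$. $P_i'$ is a manipulation at $P_i$ if $f(P_i',P_{-i})P_if(P_i,P_{-i})$ for some $P_{-i}$; it is obvious if the $P_i$-worst element of $O(P_i')$ is strictly $P_i$-better than that of $O(P_i)$, or the $P_i$-best element of $O(P_i')$ is strictly $P_i$-better than that of $O(P_i)$. NOM means no obvious manipulation exists. *)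

theory Defs
  imports Main
begin

text \<open>A preference is a strict linear order on X, represented as a relation
  (x,y) \<in> R meaning "x is strictly preferred to y".  A profile is a
  function from voters to preferences (values outside N are irrelevant).\<close>

definition voters :: "nat \<Rightarrow> nat set" where
  "voters n = {1..n}"

definition is_pref :: "nat set \<Rightarrow> (nat \<times> nat) set \<Rightarrow> bool" where
  "is_pref X R \<longleftrightarrow> R \<subseteq> X \<times> X \<and> strict_linear_order_on X R"

definition is_profile :: "nat \<Rightarrow> nat set \<Rightarrow> (nat \<Rightarrow> (nat \<times> nat) set) \<Rightarrow> bool" where
  "is_profile n X P \<longleftrightarrow> (\<forall>i\<in>voters n. is_pref X (P i))"

definition top :: "nat set \<Rightarrow> (nat \<times> nat) set \<Rightarrow> nat" where
  "top X R = (THE x. x \<in> X \<and> (\<forall>y\<in>X. y \<noteq> x \<longrightarrow> (x, y) \<in> R))"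

definition best_el :: "(nat \<times> nat) set \<Rightarrow> nat set \<Rightarrow> nat" where
  "best_el R A = (THE x. x \<in> A \<and> (\<forall>y\<in>A. y \<noteq> x \<longrightarrow> (x, y) \<in> R))"

definition worst_el :: "(nat \<times> nat) set \<Rightarrow> nat set \<Rightarrow> nat" where
  "worst_el R A = (THE x. x \<in> A \<and> (\<forall>y\<in>A. y \<noteq> x \<longrightarrow> (y, x) \<in> R))"

definition monotonic_ballots :: "nat \<Rightarrow> nat \<Rightarrow> nat \<Rightarrow> (nat set \<Rightarrow> nat) \<Rightarrow> bool" where
  "monotonic_ballots n a b p \<longleftrightarrow>
     (\<forall>S. S \<subseteq> voters n \<longrightarrow> p S \<in> {a..b}) \<and>
     p (voters n) = a \<and> p {} = b \<and>
     (\<forall>Q T. Q \<subseteq> voters n \<longrightarrow> T \<subseteq> Q \<longrightarrow> p Q \<le> p T)"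

definition gmvs :: "nat \<Rightarrow> nat set \<Rightarrow> (nat set \<Rightarrow> nat) \<Rightarrow> (nat \<Rightarrow> (nat \<times> nat) set) \<Rightarrow> nat" where
  "gmvs n X p P = Min ((\<lambda>S. Max (insert (p S) ((\<lambda>j. top X (P j)) ` S))) ` Pow (voters n))"

definition dictatorial :: "nat \<Rightarrow> nat set \<Rightarrow> ((nat \<Rightarrow> (nat \<times> nat) set) \<Rightarrow> nat) \<Rightarrow> bool" where
  "dictatorial n X f \<longleftrightarrow>
     (\<exists>i\<in>voters n. \<forall>P. is_profile n X P \<longrightarrow> f P = top X (P i))"

definition option_set :: "nat \<Rightarrow> nat set \<Rightarrow> ((nat \<Rightarrow> (nat \<times> nat) set) \<Rightarrow> nat)
    \<Rightarrow> nat \<Rightarrow> (nat \<times> nat) set \<Rightarrow> nat set" where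
  "option_set n X f i R = {f (P(i := R)) | P. is_profile n X P}"

definition manipulation :: "nat \<Rightarrow> nat set \<Rightarrow> ((nat \<Rightarrow> (nat \<times> nat) set) \<Rightarrow> nat)
    \<Rightarrow> nat \<Rightarrow> (nat \<times> nat) set \<Rightarrow> (nat \<times> nat) set \<Rightarrow> bool" where
  "manipulation n X f i R R' \<longleftrightarrow>
     (\<exists>P. is_profile n X P \<and> (f (P(i := R')), f (P(i := R))) \<in> R)"

definition obvious_manipulation :: "nat \<Rightarrow> nat set \<Rightarrow> ((nat \<Rightarrow> (nat \<times> nat) set) \<Rightarrow> nat)
    \<Rightarrow> nat \<Rightarrow> (nat \<times> nat) set \<Rightarrow> (nat \<times> nat) set \<Rightarrow> bool" where
  "obvious_manipulation n X f i R R' \<longleftrightarrow>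
     manipulation n X f i R R' \<and>
     ((worst_el R (option_set n X f i R'), worst_el R (option_set n X f i R)) \<in> R \<or>
      (best_el R (option_set n X f i R'), best_el R (option_set n X f i R)) \<in> R)"

definition NOM :: "nat \<Rightarrow> nat set \<Rightarrow> ((nat \<Rightarrow> (nat \<times> nat) set) \<Rightarrow> nat) \<Rightarrow> bool" where
  "NOM n X f \<longleftrightarrow>
     \<not> (\<exists>i\<in>voters n. \<exists>R R'. is_pref X R \<and> is_pref X R' \<and> obvious_manipulation n X f i R R')"

end

theory Submission
  imports Defs
begin

lemma best_ex:
  assumes "finite A" "A \<noteq> {}" "trans r" "total_on A r"
  shows "\<exists>x\<in>A. \<forall>y\<in>A. y \<noteq> x \<longrightarrow> (x,y) \<in> r"
  using assms
proof (induction A rule: finite_ne_induct)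
  case (singleton x) then show ?case by auto
next
  case (insert z F)
  have "total_on F r" using insert.prems(2) unfolding total_on_def by blast
  then obtain x where x: "x \<in> F" "\<forall>y\<in>F. y \<noteq> x \<longrightarrow> (x,y) \<in> r" using insert by blast
  have zx: "z \<noteq> x" using x insert by blast
  show ?case
  proof (cases "(z,x) \<in> r")
    case True
    have "\<forall>y\<in>insert z F. y \<noteq> z \<longrightarrow> (z,y) \<in> r"
    proof (intro ballI impI)
      fix y assume "y \<in> insert z F" "y \<noteq> z"
      then have "y \<in> F" by simp
      show "(z,y) \<in> r"
      proof (cases "y = x")
        case True then show ?thesis using \<open>(z,x) \<in> r\<close> by simp
      next
        case False
        then have "(x,y) \<in> r" using x \<open>y \<in> F\<close> by blast
        then show ?thesis using \<open>(z,x) \<in> r\<close> insert.prems(1) by (meson transD)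
      qed
    qed
    then show ?thesis by blast
  next
    case False
    then have "(x,z) \<in> r" using insert.prems(2) x zx unfolding total_on_def by blast
    then show ?thesis using x by blast
  qed
qed

lemma best_el_eq:
  assumes "trans r" "irrefl r" "x \<in> A" "\<forall>y\<in>A. y \<noteq> x \<longrightarrow> (x,y) \<in> r"
  shows "best_el r A = x"
  unfolding best_el_def
proof (rule the_equality)
  show "x \<in> A \<and> (\<forall>y\<in>A. y \<noteq> x \<longrightarrow> (x, y) \<in> r)" using assms by blast
next
  fix x' assume h: "x' \<in> A \<and> (\<forall>y\<in>A. y \<noteq> x' \<longrightarrow> (x', y) \<in> r)"
  show "x' = x"
  proof (rule ccontr)
    assume "x' \<noteq> x"
    then have "(x,x') \<in> r" "(x',x) \<in> r" using h assms by auto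
    then have "(x,x) \<in> r" using assms(1) unfolding trans_def by blast
    then show False using assms(2) unfolding irrefl_def by blast
  qed
qed

lemma best_el_in:
  assumes "finite A" "A \<noteq> {}" "trans r" "irrefl r" "total_on A r"
  shows "best_el r A \<in> A \<and> (\<forall>y\<in>A. y \<noteq> best_el r A \<longrightarrow> (best_el r A, y) \<in> r)"
proof -
  obtain x where "x\<in>A" "\<forall>y\<in>A. y \<noteq> x \<longrightarrow> (x,y) \<in> r" using best_ex assms by blast
  moreover then have "best_el r A = x" using best_el_eq assms by blast
  ultimately show ?thesis by simp
qed

lemma worst_best: "worst_el r A = best_el (r\<inverse>) A"
  unfolding worst_el_def best_el_def by simp

lemma top_best: "top X R = best_el R X"
  unfolding top_def best_el_def by simp

lemma pref_props:
  assumes "is_pref X R"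
  shows "trans R" "irrefl R" "total_on X R" "R \<subseteq> X \<times> X"
  using assms unfolding is_pref_def strict_linear_order_on_def by auto

lemma pref_total_sub:
  assumes "is_pref X R" "A \<subseteq> X" shows "total_on A R"
  using pref_props(3)[OF assms(1)] assms(2) unfolding total_on_def by blast

lemma worst_el_in:
  assumes "is_pref X R" "finite A" "A \<noteq> {}" "A \<subseteq> X"
  shows "worst_el R A \<in> A \<and> (\<forall>y\<in>A. y \<noteq> worst_el R A \<longrightarrow> (y, worst_el R A) \<in> R)"
proof -
  have "trans (R\<inverse>)" "irrefl (R\<inverse>)" "total_on A (R\<inverse>)"
    using pref_props[OF assms(1)] pref_total_sub[OF assms(1,4)] by auto
  then have "best_el (R\<inverse>) A \<in> A \<and> (\<forall>y\<in>A. y \<noteq> best_el (R\<inverse>) A \<longrightarrow> (best_el (R\<inverse>) A, y) \<in> R\<inverse>)"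
    using best_el_in[OF assms(2,3)] by blast
  then show ?thesis unfolding worst_best by simp
qed

lemma worst_el_eq:
  assumes "is_pref X R" "x \<in> A" "\<forall>y\<in>A. y \<noteq> x \<longrightarrow> (y,x) \<in> R"
  shows "worst_el R A = x"
proof -
  have "trans (R\<inverse>)" "irrefl (R\<inverse>)"
    using pref_props[OF assms(1)] by auto
  then show ?thesis unfolding worst_best using best_el_eq assms(2,3) by auto
qed

lemma best_el_in':
  assumes "is_pref X R" "finite A" "A \<noteq> {}" "A \<subseteq> X"
  shows "best_el R A \<in> A \<and> (\<forall>y\<in>A. y \<noteq> best_el R A \<longrightarrow> (best_el R A, y) \<in> R)"
  using best_el_in[OF assms(2,3)] pref_props[OF assms(1)] pref_total_sub[OF assms(1,4)] by blast

lemma asym_pref: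
  assumes "is_pref X R" "(x,y) \<in> R" shows "(y,x) \<notin> R"
proof
  assume "(y,x) \<in> R"
  then have "(x,x) \<in> R" using assms pref_props(1)[OF assms(1)] unfolding trans_def by blast
  then show False using pref_props(2)[OF assms(1)] unfolding irrefl_def by blast
qed

lemma top_prop:
  assumes "is_pref {a..b::nat} R" "a \<le> b"
  shows "top {a..b} R \<in> {a..b} \<and> (\<forall>y\<in>{a..b}. y \<noteq> top {a..b} R \<longrightarrow> (top {a..b} R, y) \<in> R)"
  unfolding top_best
proof (rule best_el_in'[OF assms(1)])
  show "{a..b} \<noteq> {}" using assms(2) by simp
qed auto

definition pr :: "nat \<Rightarrow> nat \<Rightarrow> nat \<Rightarrow> nat \<Rightarrow> (nat \<times> nat) set" where
  "pr a b t s = {(x,y). x \<in> {a..b} \<and> y \<in> {a..b} \<and>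
     (if x = t then 0 else if x = s then b+2 else x+1) < (if y = t then 0 else if y = s then b+2 else (y::nat)+1)}"

lemma pr_pref: "is_pref {a..b} (pr a b t s)"
  unfolding is_pref_def strict_linear_order_on_def pr_def trans_def irrefl_def total_on_def
  by (auto split: if_splits)

lemma pr_top:
  assumes "t \<in> {a..b}" shows "top {a..b} (pr a b t s) = t"
  unfolding top_best
  by (rule best_el_eq) (use pr_pref[of a b t s] pref_props assms in \<open>auto simp: pr_def\<close>)

lemma pr_bot:
  assumes "s \<in> {a..b}" "s \<noteq> t" "y \<in> {a..b}" "y \<noteq> s" shows "(y, s) \<in> pr a b t s"
  using assms unfolding pr_def by auto

lemma c1: "\<not> (L::nat) \<le> a + 1 \<Longrightarrow> a + 1 \<le> U \<Longrightarrow> L \<le> b \<Longrightarrow> U \<le> b \<Longrightarrow> a \<le> L \<Longrightarrow> a \<le> U \<Longrightarrow>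
  a \<in> {a..b} \<and> L \<in> {a..b} \<and> a+1 \<in> {a..b} \<and> a+1 \<in> {a..b} \<and> a+1 \<noteq> a \<and>
  a+1 \<in> {min a L .. max a U} \<and> a+1 \<notin> {min L L .. max L U} \<and>
  min (max a (a+1)) (min (max L (a+1)) (max U a)) = a+1 \<and>
  min (max L (a+1)) (min (max L (a+1)) (max U L)) \<noteq> a+1"
  by (simp add: min_def max_def)
lemma c2: "\<not> (L::nat) \<le> a + 1 \<Longrightarrow> U = a \<Longrightarrow> L \<noteq> b \<Longrightarrow> L \<le> b \<Longrightarrow> a < b \<Longrightarrow>
  b \<in> {a..b} \<and> a \<in> {a..b} \<and> L \<in> {a..b} \<and> L \<in> {a..b} \<and> L \<noteq> b \<and>
  L \<in> {min b L .. max b U} \<and> L \<notin> {min a L .. max a U} \<and>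
  min (max b L) (min (max L L) (max U b)) = L \<and>
  min (max a L) (min (max L L) (max U a)) \<noteq> L"
  by (simp add: min_def max_def)
lemma c3: "\<not> b \<le> (U::nat) + 1 \<Longrightarrow> L \<le> b - 1 \<Longrightarrow> a \<le> L \<Longrightarrow> a \<le> U \<Longrightarrow> U \<le> b \<Longrightarrow>
  b \<in> {a..b} \<and> U \<in> {a..b} \<and> b-1 \<in> {a..b} \<and> b-1 \<in> {a..b} \<and> b-1 \<noteq> b \<and>
  b-1 \<in> {min b L .. max b U} \<and> b-1 \<notin> {min U L .. max U U} \<and>
  min (max b (b-1)) (min (max L (b-1)) (max U b)) = b-1 \<and>
  min (max U (b-1)) (min (max L (b-1)) (max U U)) \<noteq> b-1"
  by (simp add: min_def max_def) arith
lemma c4: "\<not> b \<le> (U::nat) + 1 \<Longrightarrow> L = b \<Longrightarrow> U \<noteq> a \<Longrightarrow> a \<le> U \<Longrightarrow> a < b \<Longrightarrow>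
  a \<in> {a..b} \<and> b \<in> {a..b} \<and> U \<in> {a..b} \<and> U \<in> {a..b} \<and> U \<noteq> a \<and>
  U \<in> {min a L .. max a U} \<and> U \<notin> {min b L .. max b U} \<and>
  min (max a U) (min (max L U) (max U a)) = U \<and>
  min (max b U) (min (max L U) (max U b)) \<noteq> U"
  by (simp add: min_def max_def)

context
  fixes n a b :: nat and p :: "nat set \<Rightarrow> nat"
  assumes n2: "n \<ge> 2" and ab: "a < b" and mb: "monotonic_ballots n a b p"
begin

lemma p_range: "S \<subseteq> voters n \<Longrightarrow> a \<le> p S \<and> p S \<le> b"
  using mb unfolding monotonic_ballots_def by auto

lemma p_mono: "T \<subseteq> Q \<Longrightarrow> Q \<subseteq> voters n \<Longrightarrow> p Q \<le> p T"
  using mb unfolding monotonic_ballots_def by auto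

lemma pN: "p (voters n) = a" and p0: "p {} = b"
  using mb unfolding monotonic_ballots_def by auto

lemma finN: "finite (voters n)" unfolding voters_def by simp

lemma bounds:
  assumes "i \<in> voters n"
  shows "min (top {a..b} (P i)) (p (voters n - {i})) \<le> gmvs n {a..b} p P \<and>
         gmvs n {a..b} p P \<le> max (top {a..b} (P i)) (p {i})"
proof -
  let ?t = "top {a..b} (P i)"
  let ?g = "\<lambda>S. Max (insert (p S) ((\<lambda>j. top {a..b} (P j)) ` S))"
  have fin: "finite (?g ` Pow (voters n))" using finN by simp
  have ne: "?g ` Pow (voters n) \<noteq> {}" by blast
  have ge: "\<forall>S\<in>Pow (voters n). min ?t (p (voters n - {i})) \<le> ?g S"
  proof
    fix S assume S: "S \<in> Pow (voters n)"
    then have fS: "finite S" using finN finite_subset by blast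
    have g1: "p S \<le> ?g S" using fS by simp
    show "min ?t (p (voters n - {i})) \<le> ?g S"
    proof (cases "i \<in> S")
      case True
      then have "?t \<le> ?g S" using fS by simp
      then show ?thesis by simp
    next
      case False
      then have "S \<subseteq> voters n - {i}" using S by blast
      then have "p (voters n - {i}) \<le> p S" using p_mono[of S "voters n - {i}"] by blast
      then show ?thesis using g1 by simp
    qed
  qed
  have "{i} \<in> Pow (voters n)" using assms by simp
  then have "Min (?g ` Pow (voters n)) \<le> ?g {i}" using fin by (meson Min_le imageI)
  moreover have "?g {i} = max ?t (p {i})" by (simp add: max.commute)
  ultimately have hi: "Min (?g ` Pow (voters n)) \<le> max ?t (p {i})" by simp
  have lo: "min ?t (p (voters n - {i})) \<le> Min (?g ` Pow (voters n))" using ge fin ne by simp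
  have "gmvs n {a..b} p P = Min (?g ` Pow (voters n))" unfolding gmvs_def by (rule refl)
  then show ?thesis using lo hi by simp
qed

lemma uniform:
  assumes i: "i \<in> voters n" and t: "top {a..b} R = t" "t \<le> b" "a \<le> t" and y: "top {a..b} Ry = y"
  shows "gmvs n {a..b} p ((\<lambda>j. Ry)(i := R)) =
     min (max t y) (min (max (p (voters n - {i})) y) (max (p {i}) t))"
    (is "_ = ?c")
proof -
  let ?P = "(\<lambda>j. Ry)(i := R)"
  let ?g = "\<lambda>S. Max (insert (p S) ((\<lambda>j. top {a..b} (?P j)) ` S))"
  have tp: "\<And>j. top {a..b} (?P j) = (if j = i then t else y)" using t y by simp
  have fin: "finite (?g ` Pow (voters n))" using finN by simp
  have ne: "?g ` Pow (voters n) \<noteq> {}" by blast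
  have ge: "\<forall>S\<in>Pow (voters n). ?c \<le> ?g S"
  proof
    fix S assume S: "S \<in> Pow (voters n)"
    then have fS: "finite S" using finN finite_subset by blast
    have g1: "p S \<le> ?g S" using fS by simp
    have g2: "\<And>j. j \<in> S \<Longrightarrow> top {a..b} (?P j) \<le> ?g S" using fS by simp
    have Ub: "p {i} \<le> b" using p_range i by simp
    show "?c \<le> ?g S"
    proof (cases "S = {}")
      case True
      then show ?thesis using g1 p0 Ub t by simp
    next
      case False
      show ?thesis
      proof (cases "i \<in> S")
        case True
        then have "t \<le> ?g S" using g2[of i] t(1) by simp
        show ?thesis
        proof (cases "S = {i}")
          case True
          then show ?thesis using g1 \<open>t \<le> ?g S\<close> by simp
        next
          case False
          then obtain j where "j \<in> S" "j \<noteq> i" using \<open>i \<in> S\<close> by blast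
          then have "y \<le> ?g S" using g2[of j] y(1) by simp
          then show ?thesis using \<open>t \<le> ?g S\<close> by simp
        qed
      next
        case False
        obtain j where "j \<in> S" using \<open>S \<noteq> {}\<close> by blast
        then have "y \<le> ?g S" using g2[of j] tp False by (metis)
        moreover have "p (voters n - {i}) \<le> p S"
        proof -
          have "S \<subseteq> voters n - {i}" using S False by blast
          then show ?thesis using p_mono[of S "voters n - {i}"] by blast
        qed
        ultimately show ?thesis using g1 by simp
      qed
    qed
  qed
  have le1: "Min (?g ` Pow (voters n)) \<le> max t y"
  proof -
    have "p (voters n) \<le> max t y" using pN t(3) by simp
    then have "?g (voters n) \<le> max t y" using finN tp by auto
    then show ?thesis using fin by (meson Min_le Pow_top imageI order.trans)
  qed
  have le2: "Min (?g ` Pow (voters n)) \<le> max (p (voters n - {i})) y"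
  proof -
    have "?g (voters n - {i}) \<le> max (p (voters n - {i})) y" using finN tp y(1) by auto
    then show ?thesis using fin by (meson Min_le Pow_iff Diff_subset imageI order.trans)
  qed
  have le3: "Min (?g ` Pow (voters n)) \<le> max (p {i}) t"
  proof -
    have "?g {i} \<le> max (p {i}) t" using tp t(1) by auto
    moreover have "{i} \<in> Pow (voters n)" using i by simp
    ultimately show ?thesis using fin by (meson Min_le imageI order.trans)
  qed
  have m: "Min (?g ` Pow (voters n)) = ?c"
    using le1 le2 le3 ge fin ne by (simp add: order.antisym)
  have "gmvs n {a..b} p ?P = Min (?g ` Pow (voters n))" unfolding gmvs_def by (rule refl)
  then show ?thesis using m by (rule trans)
qed

lemma prof_const: "is_profile n {a..b} (\<lambda>j. pr a b y y)"
  unfolding is_profile_def using pr_pref by simp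

lemma option_eq:
  assumes i: "i \<in> voters n" and R: "is_pref {a..b} R"
  shows "option_set n {a..b} (gmvs n {a..b} p) i R =
    {min (top {a..b} R) (p (voters n - {i})) .. max (top {a..b} R) (p {i})}"
proof -
  let ?t = "top {a..b} R"
  have tX: "?t \<in> {a..b}" using top_prop[OF R] ab by simp
  show ?thesis
  proof
    show "option_set n {a..b} (gmvs n {a..b} p) i R \<subseteq> {min ?t (p (voters n - {i})) .. max ?t (p {i})}"
      unfolding option_set_def using bounds[OF i, of "P(i := R)" for P] by auto
  next
    show "{min ?t (p (voters n - {i})) .. max ?t (p {i})} \<subseteq> option_set n {a..b} (gmvs n {a..b} p) i R"
    proof
      fix x assume x: "x \<in> {min ?t (p (voters n - {i})) .. max ?t (p {i})}"
      have Lr: "a \<le> p (voters n - {i})" "p (voters n - {i}) \<le> b" using p_range by auto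
      have Ur: "a \<le> p {i}" "p {i} \<le> b" using p_range i by auto
      have xX: "x \<in> {a..b}" using x tX Lr Ur by auto
      have "gmvs n {a..b} p ((\<lambda>j. pr a b x x)(i := R)) =
         min (max ?t x) (min (max (p (voters n - {i})) x) (max (p {i}) ?t))"
        by (rule uniform[OF i]) (use tX pr_top[OF xX] in auto)
      also have "\<dots> = x" using x by auto
      finally show "x \<in> option_set n {a..b} (gmvs n {a..b} p) i R"
        unfolding option_set_def using prof_const[of x] by force
    qed
  qed
qed


lemma om_from:
  assumes i: "i \<in> voters n" and X: "t \<in> {a..b}" "t' \<in> {a..b}" "y \<in> {a..b}" "s \<in> {a..b}"
    and st: "s \<noteq> t"
    and sO: "s \<in> {min t (p (voters n - {i})) .. max t (p {i})}"
    and sO': "s \<notin> {min t' (p (voters n - {i})) .. max t' (p {i})}"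
    and F1: "min (max t y) (min (max (p (voters n - {i})) y) (max (p {i}) t)) = s"
    and F2: "min (max t' y) (min (max (p (voters n - {i})) y) (max (p {i}) t')) \<noteq> s"
  shows "\<not> NOM n {a..b} (gmvs n {a..b} p)"
proof -
  define R where "R = pr a b t s"
  define R' where "R' = pr a b t' t'"
  define Ry where "Ry = pr a b y y"
  let ?L = "p (voters n - {i})" and ?U = "p {i}"
  have Lr: "a \<le> ?L" "?L \<le> b" using p_range by auto
  have Ur: "a \<le> ?U" "?U \<le> b" using p_range i by auto
  have pR: "is_pref {a..b} R" "is_pref {a..b} R'" unfolding R_def R'_def by (rule pr_pref)+
  have tR: "top {a..b} R = t" unfolding R_def using pr_top X by blast
  have tR': "top {a..b} R' = t'" unfolding R'_def using pr_top X by blast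
  have tRy: "top {a..b} Ry = y" unfolding Ry_def using pr_top X by blast
  have e1: "gmvs n {a..b} p ((\<lambda>j. Ry)(i := R)) = s"
    using uniform[OF i tR _ _ tRy] X F1 by simp
  have e2: "gmvs n {a..b} p ((\<lambda>j. Ry)(i := R')) =
     min (max t' y) (min (max ?L y) (max ?U t'))"
    using uniform[OF i tR' _ _ tRy] X by simp
  let ?v = "min (max t' y) (min (max ?L y) (max ?U t'))"
  have vX: "?v \<in> {a..b}" using X Lr Ur by auto
  have man: "manipulation n {a..b} (gmvs n {a..b} p) i R R'"
    unfolding manipulation_def
  proof (intro exI conjI)
    show "is_profile n {a..b} (\<lambda>j. Ry)" unfolding Ry_def by (rule prof_const)
    show "(gmvs n {a..b} p ((\<lambda>j. Ry)(i := R')), gmvs n {a..b} p ((\<lambda>j. Ry)(i := R))) \<in> R"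
      using pr_bot[OF X(4) st vX F2] e1 e2 unfolding R_def by simp
  qed
  have O: "option_set n {a..b} (gmvs n {a..b} p) i R = {min t ?L .. max t ?U}"
    using option_eq[OF i pR(1)] tR by simp
  have O': "option_set n {a..b} (gmvs n {a..b} p) i R' = {min t' ?L .. max t' ?U}"
    using option_eq[OF i pR(2)] tR' by simp
  have w: "worst_el R {min t ?L .. max t ?U} = s"
  proof (rule worst_el_eq[OF pR(1) sO], intro ballI impI)
    fix z assume "z \<in> {min t ?L .. max t ?U}" "z \<noteq> s"
    then have "z \<in> {a..b}" using X Lr Ur by auto
    then show "(z, s) \<in> R" unfolding R_def using pr_bot[OF X(4) st] \<open>z \<noteq> s\<close> by blast
  qed
  have sub': "{min t' ?L .. max t' ?U} \<subseteq> {a..b}" using X Lr Ur by auto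
  have ne': "{min t' ?L .. max t' ?U} \<noteq> {}" using X by auto
  have w'': "worst_el R {min t' ?L .. max t' ?U} \<in> {min t' ?L .. max t' ?U}"
    using worst_el_in[OF pR(1) _ ne' sub'] by simp
  then have "worst_el R {min t' ?L .. max t' ?U} \<noteq> s" using sO' by auto
  moreover have "worst_el R {min t' ?L .. max t' ?U} \<in> {a..b}" using w'' sub' by blast
  ultimately have "(worst_el R {min t' ?L .. max t' ?U}, s) \<in> R"
    unfolding R_def using pr_bot[OF X(4) st] by blast
  then have "obvious_manipulation n {a..b} (gmvs n {a..b} p) i R R'"
    unfolding obvious_manipulation_def O O' w using man by blast
  then show ?thesis unfolding NOM_def using i pR by blast
qed

lemma om_conj:
  assumes i: "i \<in> voters n"
    and H: "t \<in> {a..b} \<and> t' \<in> {a..b} \<and> y \<in> {a..b} \<and> s \<in> {a..b} \<and> s \<noteq> t \<and>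
      s \<in> {min t (p (voters n - {i})) .. max t (p {i})} \<and>
      s \<notin> {min t' (p (voters n - {i})) .. max t' (p {i})} \<and>
      min (max t y) (min (max (p (voters n - {i})) y) (max (p {i}) t)) = s \<and>
      min (max t' y) (min (max (p (voters n - {i})) y) (max (p {i}) t')) \<noteq> s"
  shows "\<not> NOM n {a..b} (gmvs n {a..b} p)"
  using H by (elim conjE) (rule om_from[OF i, of t t' y s]; assumption)

end

theorem theorem3:
  fixes n a b :: nat and p :: "nat set \<Rightarrow> nat"
  assumes "n \<ge> 2"
    and "a < b"
    and "monotonic_ballots n a b p"
    and "\<not> dictatorial n {a..b} (gmvs n {a..b} p)"
  shows "NOM n {a..b} (gmvs n {a..b} p) \<longleftrightarrow>
    (\<forall>i\<in>voters n. p (voters n - {i}) \<in> {a, a + 1} \<and> p {i} \<in> {b - 1, b})"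
proof -
  note n2 = assms(1) and ab = assms(2) and mb = assms(3)
  let ?f = "gmvs n {a..b} p"
  have Lr: "\<And>i. a \<le> p (voters n - {i}) \<and> p (voters n - {i}) \<le> b"
    using p_range[OF n2 ab mb] by auto
  have Ur: "\<And>i. i \<in> voters n \<Longrightarrow> a \<le> p {i} \<and> p {i} \<le> b"
    using p_range[OF n2 ab mb] by auto
  have nd: "\<And>i. i \<in> voters n \<Longrightarrow> \<not> (p (voters n - {i}) = b \<and> p {i} = a)"
  proof
    fix i assume i: "i \<in> voters n" and h: "p (voters n - {i}) = b \<and> p {i} = a"
    have "\<forall>P. is_profile n {a..b} P \<longrightarrow> ?f P = top {a..b} (P i)"
    proof (intro allI impI)
      fix P assume "is_profile n {a..b} P"
      then have "is_pref {a..b} (P i)" using i unfolding is_profile_def by blast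
      then have "top {a..b} (P i) \<in> {a..b}" using top_prop ab by simp
      then show "?f P = top {a..b} (P i)" using bounds[OF n2 ab mb i, of P] h by auto
    qed
    then show False using assms(4) i unfolding dictatorial_def by blast
  qed
  show ?thesis
  proof
    assume nom: "NOM n {a..b} ?f"
    show "\<forall>i\<in>voters n. p (voters n - {i}) \<in> {a, a + 1} \<and> p {i} \<in> {b - 1, b}"
    proof
      fix i assume i: "i \<in> voters n"
      note om = om_conj[OF n2 ab mb i]
      have Li: "a \<le> p (voters n - {i})" "p (voters n - {i}) \<le> b" using Lr[of i] by auto
      have Ui: "a \<le> p {i}" "p {i} \<le> b" using Ur[OF i] by auto
      have L: "p (voters n - {i}) \<le> a + 1"
      proof (rule ccontr)
        assume c: "\<not> ?thesis"
        show False
        proof (cases "p {i} \<ge> a + 1")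
          case True
          have "\<not> NOM n {a..b} ?f"
            by (rule om[OF c1[OF c True Li(2) Ui(2) Li(1) Ui(1)]])
          then show False using nom by blast
        next
          case False
          then have "p {i} = a" using Ur[OF i] by simp
          then have "p (voters n - {i}) \<noteq> b" using nd[OF i] by blast
          have "\<not> NOM n {a..b} ?f"
            by (rule om[OF c2[OF c \<open>p {i} = a\<close> \<open>p (voters n - {i}) \<noteq> b\<close> Li(2) ab]])
          then show False using nom by blast
        qed
      qed
      have U: "b \<le> p {i} + 1"
      proof (rule ccontr)
        assume c: "\<not> ?thesis"
        show False
        proof (cases "p (voters n - {i}) \<le> b - 1")
          case True
          have "\<not> NOM n {a..b} ?f"
            by (rule om[OF c3[OF c True Li(1) Ui(1) Ui(2)]])
          then show False using nom by blast
        next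
          case False
          then have "p (voters n - {i}) = b" using Lr[of i] ab by arith
          then have "p {i} \<noteq> a" using nd[OF i] by blast
          have "\<not> NOM n {a..b} ?f"
            by (rule om[OF c4[OF c \<open>p (voters n - {i}) = b\<close> \<open>p {i} \<noteq> a\<close> Ui(1) ab]])
          then show False using nom by blast
        qed
      qed
      show "p (voters n - {i}) \<in> {a, a + 1} \<and> p {i} \<in> {b - 1, b}"
        using L U Lr[of i] Ur[OF i] by auto
    qed
  next
    assume cond: "\<forall>i\<in>voters n. p (voters n - {i}) \<in> {a, a + 1} \<and> p {i} \<in> {b - 1, b}"
    show "NOM n {a..b} ?f"
      unfolding NOM_def
    proof (intro notI, elim bexE exE conjE)
      fix i R R'
      assume i: "i \<in> voters n" and R: "is_pref {a..b} R" and R': "is_pref {a..b} R'"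
        and om: "obvious_manipulation n {a..b} ?f i R R'"
      define t where "t = top {a..b} R"
      define t' where "t' = top {a..b} R'"
      let ?L = "p (voters n - {i})" and ?U = "p {i}"
      have cL: "?L \<le> a + 1" and cU: "b \<le> ?U + 1" using cond i by auto
      have tp: "t \<in> {a..b}" "\<forall>y\<in>{a..b}. y \<noteq> t \<longrightarrow> (t, y) \<in> R"
        unfolding t_def using top_prop[OF R] ab by auto
      have tp': "t' \<in> {a..b}" unfolding t'_def using top_prop[OF R'] ab by auto
      have O: "option_set n {a..b} ?f i R = {min t ?L .. max t ?U}"
        unfolding t_def using option_eq[OF n2 ab mb i R] .
      have O': "option_set n {a..b} ?f i R' = {min t' ?L .. max t' ?U}"
        unfolding t'_def using option_eq[OF n2 ab mb i R'] .
      let ?O = "{min t ?L .. max t ?U}" and ?O' = "{min t' ?L .. max t' ?U}"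
      have sub: "?O \<subseteq> {a..b}" "?O' \<subseteq> {a..b}" using tp tp' Lr[of i] Ur[OF i] by auto
      have tin: "t \<in> ?O" "t' \<in> ?O'" by auto
      have ne: "?O \<noteq> {}" "?O' \<noteq> {}" using tin by auto
      have b0: "best_el R ?O = t"
        by (rule best_el_eq[OF pref_props(1,2)[OF R] tin(1)]) (use tp(2) sub(1) in blast)
      have b1: "best_el R ?O' \<in> ?O'" using best_el_in'[OF R _ ne(2) sub(2)] by simp
      have nb: "(best_el R ?O', best_el R ?O) \<notin> R"
      proof
        assume h: "(best_el R ?O', best_el R ?O) \<in> R"
        show False
        proof (cases "best_el R ?O' = t")
          case True
          then show False using h b0 pref_props(2)[OF R] unfolding irrefl_def by simp
        next
          case False
          then have "(t, best_el R ?O') \<in> R" using tp b1 sub by blast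
          then show False using h b0 asym_pref[OF R] by simp
        qed
      qed
      define w0 where "w0 = worst_el R ?O"
      define w where "w = worst_el R ?O'"
      have w0p: "w0 \<in> ?O" "\<forall>y\<in>?O. y \<noteq> w0 \<longrightarrow> (y, w0) \<in> R"
        unfolding w0_def using worst_el_in[OF R _ ne(1) sub(1)] by auto
      have wp: "w \<in> ?O'" "\<forall>y\<in>?O'. y \<noteq> w \<longrightarrow> (y, w) \<in> R"
        unfolding w_def using worst_el_in[OF R _ ne(2) sub(2)] by auto
      obtain z where z: "z \<in> ?O'" "z = w0 \<or> (w0, z) \<in> R"
      proof (cases "w0 = t")
        case True
        show ?thesis
        proof (cases "t' = t")
          case True
          then show ?thesis using that tin \<open>w0 = t\<close> by blast
        next
          case False
          then have "(t, t') \<in> R" using tp tp' by blast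
          then show ?thesis using that tin \<open>w0 = t\<close> by blast
        qed
      next
        case False
        have "w0 \<in> ?O'" using False w0p(1) tp cL cU by auto
        then show ?thesis using that by blast
      qed
      have nw: "(w, w0) \<notin> R"
      proof
        assume h: "(w, w0) \<in> R"
        have tr: "trans R" using pref_props[OF R] by simp
        show False
        proof (cases "z = w")
          case True
          then show False using z(2) h asym_pref[OF R] pref_props(2)[OF R] unfolding irrefl_def by blast
        next
          case False
          then have "(z, w) \<in> R" using wp z(1) by blast
          then have "(z, w0) \<in> R" using h tr unfolding trans_def by blast
          then show False using z(2) asym_pref[OF R] pref_props(2)[OF R] unfolding irrefl_def by blast
        qed
      qed
      show False using om nb nw unfolding obvious_manipulation_def O O' w0_def w_def by blast
    qed
  qed
qed

end
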